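(* Let $\theta\mapsto\mathcal E_\theta$ be a differentiable family of unital quantum channels on $d\times d$ matrices with Kraus operators $\{K_i^\theta\}$ and Liouville representation $T_\theta=\sum_iK_i^\theta\otimes K_i^{\theta*}$, and let $\theta_0$ be a parameter value. Denote by $P$ the projection onto the subspace $\mathcal P$ spanned by the eigenvectors of $T_\theta^\dagger T_\theta$ with eigenvalue $1$. Suppose that at $\theta=\theta_0$: (i) $PT_\theta^\dagger\dot T_\theta P\neq0$ and $PT_\theta^\dagger\dot T_\theta P$ is a normal operator; and (ii) there exist a unitary $U_c$ and a matrix $R_0$ with $|R_0\rangle\rangle$ an eigenvector of $PT_\theta^\dagger\dot T_\theta P$ associated with a nonzero eigenvalue, such that $$U_c^\dagger R_0U_c=\sum_kK_k^{\theta_0}R_0K_k^{\theta_0\dagger}.$$ Then the sequential QFI of $N$ channels can achieve the Heisenberg limit by applying the same unitary control $U_c$ after each channel: there exists an input state $\rho_0$ (independent of $N$) such that, with $\rho_\theta^{(N)}=(\mathcal U_c\circ\mathcal E_\theta)^N(\rho_0)$ where $\mathcal U_c(\rho)=U_c\rho U_c^\dagger$, one has $\liminf_{N\to\infty}F^Q(\rho_\theta^{(N)})|_{\theta=\theta_0}/N^2>0$.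
   Context: Unital means $\mathcal E_\theta(I)=I$ (channels are trace preserving). For a $d\times d$ matrix $A$, $|A\rangle\rangle=(A_{11},A_{12},\dots,A_{dd})^T$ is its vectorization and $\langle\langle A|B\rangle\rangle=\operatorname{Tr}(A^\dagger B)$; then $T_\theta|\rho\rangle\rangle=|\mathcal E_\theta(\rho)\rangle\rangle$, and the controlled channel $\mathcal U_c\circ\mathcal E_\theta$ has Liouville representation $(U_c\otimes U_c^* )T_\theta$. $T_\theta^\dagger$ is the conjugate transpose of the $d^2\times d^2$ matrix $T_\theta$, and $\dot T_\theta=dT_\theta/d\theta$; $P$ and $PT_\theta^\dagger\dot T_\theta P$ are evaluated at $\theta=\theta_0$. $F^Q(\rho_\theta)=\operatorname{Tr}(\rho_\theta L_{\rho_\theta}^2)$ is the quantum Fisher information with symmetric logarithmic derivative defined by $2\dot\rho_\theta=\rho_\theta L_{\rho_\theta}+L_{\rho_\theta}\rho_\theta$. No ancilla is used. *)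

theory Defs
  imports "HOL-Analysis.Analysis"
begin

type_synonym 'n cmat = "complex ^'n ^'n"

definition ctrace :: "'n::finite cmat \<Rightarrow> complex" where
  "ctrace A = (\<Sum>i\<in>UNIV. A $ i $ i)"

definition cadj :: "complex ^'m ^'n \<Rightarrow> complex ^'n ^'m" where
  "cadj A = (\<chi> i j. cnj (A $ j $ i))"

definition cconj :: "complex ^'m ^'n \<Rightarrow> complex ^'m ^'n" where
  "cconj A = (\<chi> i j. cnj (A $ i $ j))"

definition hermitian :: "'n::finite cmat \<Rightarrow> bool" where
  "hermitian A \<longleftrightarrow> cadj A = A"

definition unitary :: "'n::finite cmat \<Rightarrow> bool" where
  "unitary U \<longleftrightarrow> cadj U ** U = mat 1 \<and> U ** cadj U = mat 1"

definition normal_op :: "'n::finite cmat \<Rightarrow> bool" where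
  "normal_op A \<longleftrightarrow> A ** cadj A = cadj A ** A"

definition psd :: "'n::finite cmat \<Rightarrow> bool" where
  "psd A \<longleftrightarrow> hermitian A \<and>
     (\<forall>x::complex^'n. 0 \<le> Re (\<Sum>i\<in>UNIV. cnj (x $ i) * (A *v x) $ i))"

definition density_matrix :: "'n::finite cmat \<Rightarrow> bool" where
  "density_matrix \<rho> \<longleftrightarrow> psd \<rho> \<and> ctrace \<rho> = 1"

definition vecm :: "'n::finite cmat \<Rightarrow> complex ^('n \<times> 'n)" where
  "vecm A = (\<chi> p. A $ fst p $ snd p)"

text \<open>Kronecker product, consistent with vecm: (A \<otimes> B) vecm X = vecm (A X B^T).\<close>
definition kron :: "'n::finite cmat \<Rightarrow> 'n cmat \<Rightarrow> complex ^('n \<times> 'n) ^('n \<times> 'n)" where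
  "kron A B = (\<chi> p q. A $ fst p $ fst q * B $ snd p $ snd q)"

definition kraus_apply :: "('k::finite \<Rightarrow> 'n::finite cmat) \<Rightarrow> 'n cmat \<Rightarrow> 'n cmat" where
  "kraus_apply K \<rho> = (\<Sum>k\<in>UNIV. K k ** \<rho> ** cadj (K k))"

definition liouville :: "('k::finite \<Rightarrow> 'n::finite cmat) \<Rightarrow> complex ^('n \<times> 'n) ^('n \<times> 'n)" where
  "liouville K = (\<Sum>k\<in>UNIV. kron (K k) (cconj (K k)))"

definition unital_channel :: "('k::finite \<Rightarrow> 'n::finite cmat) \<Rightarrow> bool" where
  "unital_channel K \<longleftrightarrow> (\<Sum>k\<in>UNIV. cadj (K k) ** K k) = mat 1 \<and>
                         (\<Sum>k\<in>UNIV. K k ** cadj (K k)) = mat 1"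

text \<open>Quantum Fisher information Tr(rho L^2), L a Hermitian SLD: 2 drho = rho L + L rho.
  This value does not depend on the choice of Hermitian solution L.\<close>
definition qfi_sld :: "'n::finite cmat \<Rightarrow> 'n cmat \<Rightarrow> real" where
  "qfi_sld \<rho> d\<rho> = (let L = (SOME L. hermitian L \<and> d\<rho> + d\<rho> = \<rho> ** L + L ** \<rho>)
                     in Re (ctrace (\<rho> ** L ** L)))"

definition QFI :: "(real \<Rightarrow> 'n::finite cmat) \<Rightarrow> real \<Rightarrow> real" where
  "QFI \<rho>f \<theta>0 = qfi_sld (\<rho>f \<theta>0) (vector_derivative \<rho>f (at \<theta>0))"

end

theory Submission
  imports Defs
begin


definition ip :: "complex^'m::finite \<Rightarrow> complex^'m \<Rightarrow> complex" where
  "ip u v = (\<Sum>p\<in>UNIV. cnj (u$p) * v$p)"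

definition unvec :: "complex^('n::finite \<times> 'n) \<Rightarrow> complex^'n^'n" where
  "unvec v = (\<chi> i j. v $ (i,j))"

lemma cadj_cadj[simp]: "cadj (cadj A) = A"
  by (simp add: cadj_def vec_eq_iff)

lemma cadj_mult: "cadj (A ** B) = cadj B ** cadj (A :: complex^'n::finite^'m)"
  by (simp add: cadj_def vec_eq_iff matrix_matrix_mult_def mult.commute)

lemma cadj_add: "cadj (A + B) = cadj A + cadj B"
  by (simp add: cadj_def vec_eq_iff)

lemma cadj_diff: "cadj (A - B) = cadj A - cadj B"
  by (simp add: cadj_def vec_eq_iff)

lemma cadj_mat: "cadj (mat c :: complex^'n^'n) = mat (cnj c)"
  by (simp add: cadj_def vec_eq_iff mat_def)

lemma cadj_scaleR: "cadj (r *\<^sub>R A) = r *\<^sub>R cadj A"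
  by (simp add: cadj_def vec_eq_iff)

lemma cadj_sum: "finite S \<Longrightarrow> cadj (\<Sum>k\<in>S. f k) = (\<Sum>k\<in>S. cadj (f k))"
  by (induction S rule: finite_induct) (auto simp: cadj_add cadj_def vec_eq_iff)

lemma ctrace_cadj: "ctrace (cadj A) = cnj (ctrace A)"
  by (simp add: ctrace_def cadj_def)

lemma ctrace_comm: "ctrace (A ** B) = ctrace (B ** (A :: complex^'n::finite^'m))"
  unfolding ctrace_def matrix_matrix_mult_def
  by (simp, subst sum.swap, simp add: mult.commute)

lemma ctrace_add: "ctrace (A + B) = ctrace A + ctrace B"
  by (simp add: ctrace_def sum.distrib)

lemma vecm_unvec[simp]: "vecm (unvec v) = v"
  by (simp add: vecm_def unvec_def vec_eq_iff)

lemma unvec_vecm[simp]: "unvec (vecm A) = A"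
  by (simp add: vecm_def unvec_def vec_eq_iff)

lemma vecm_inj: "vecm A = vecm B \<Longrightarrow> A = B"
  by (metis unvec_vecm)

lemma vecm_add: "vecm (A + B) = vecm A + vecm B"
  by (simp add: vecm_def vec_eq_iff)

lemma vecm_sum: "finite S \<Longrightarrow> vecm (\<Sum>k\<in>S. f k) = (\<Sum>k\<in>S. vecm (f k))"
  by (induction S rule: finite_induct) (auto simp: vecm_add vecm_def vec_eq_iff)

lemma sum_UNIV_pair: "(\<Sum>p\<in>(UNIV::('a::finite\<times>'b::finite) set). f p) = (\<Sum>a\<in>UNIV. \<Sum>b\<in>UNIV. f (a,b))"
  by (simp add: sum.cartesian_product UNIV_Times_UNIV[symmetric] del: UNIV_Times_UNIV)

lemma kron_vecm: "kron A (cconj A) *v vecm X = vecm (A ** X ** cadj A)"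
proof -
  have "(kron A (cconj A) *v vecm X) $ (i,j) = vecm (A ** X ** cadj A) $ (i,j)" for i j
    unfolding kron_def cconj_def cadj_def vecm_def matrix_vector_mult_def matrix_matrix_mult_def
    by (simp add: sum_UNIV_pair sum_distrib_left sum_distrib_right mult_ac, subst sum.swap, simp)
  then show ?thesis by (simp add: vec_eq_iff)
qed

lemma sum_mv: "finite S \<Longrightarrow> (\<Sum>k\<in>S. M k) *v x = (\<Sum>k\<in>S. M k *v x)"
  by (induction S rule: finite_induct) (auto simp: matrix_vector_mult_add_rdistrib)

lemma liouville_vecm: "liouville K *v vecm X = vecm (kraus_apply K X)"
  unfolding liouville_def kraus_apply_def
  by (simp add: sum_mv kron_vecm vecm_sum)

lemma ip_adj: "ip u (M *v v) = ip (cadj M *v u) v"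
  unfolding ip_def matrix_vector_mult_def cadj_def
  by (simp add: sum_distrib_left sum_distrib_right mult_ac, subst sum.swap, simp)


definition smat :: "complex \<Rightarrow> complex^'m^'n \<Rightarrow> complex^'m^'n" where
  "smat c A = (\<chi> i j. c * A$i$j)"

lemma mv_smult: "M *v (c *s v) = c *s (M *v (v::complex^'n::finite))"
  by (simp add: vec_eq_iff matrix_vector_mult_def sum_distrib_left mult_ac)

lemma mv_add: "M *v (u + v) = M *v u + M *v (v::complex^'n::finite)"
  by (simp add: vec_eq_iff matrix_vector_mult_def sum.distrib distrib_left)

lemma mv_diff: "M *v (u - v) = M *v u - M *v (v::complex^'n::finite)"
  by (simp add: vec_eq_iff matrix_vector_mult_def sum_subtractf right_diff_distrib)

lemma mv_zero: "M *v (0::complex^'n::finite) = 0"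
  by (simp add: vec_eq_iff matrix_vector_mult_def)

lemma ip_add_left: "ip (u + v) w = ip u w + ip v w"
  by (simp add: ip_def sum.distrib distrib_right)
lemma ip_add_right: "ip w (u + v) = ip w u + ip w v"
  by (simp add: ip_def sum.distrib distrib_left)
lemma ip_diff_left: "ip (u - v) w = ip u w - ip v w"
  by (simp add: ip_def sum_subtractf left_diff_distrib)
lemma ip_diff_right: "ip w (u - v) = ip w u - ip w v"
  by (simp add: ip_def sum_subtractf right_diff_distrib)
lemma ip_smult_left: "ip (c *s u) w = cnj c * ip u w"
  by (simp add: ip_def sum_distrib_left mult_ac)
lemma ip_smult_right: "ip w (c *s u) = c * ip w u"
  by (simp add: ip_def sum_distrib_left mult_ac)

lemma ip_self_zero: "ip u u = 0 \<Longrightarrow> u = 0"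
proof -
  assume h: "ip u u = 0"
  have "ip u u = of_real (\<Sum>p\<in>UNIV. (cmod (u$p))^2)"
    unfolding ip_def of_real_sum
    by (rule sum.cong) (simp_all add: complex_norm_square mult.commute del: of_real_power)
  then have "(\<Sum>p\<in>UNIV. (cmod (u$p))^2) = 0" using h by (metis of_real_eq_0_iff)
  then have "\<forall>p\<in>UNIV. (cmod (u$p))^2 = 0"
    by (subst (asm) sum_nonneg_eq_0_iff) auto
  then show "u = 0" by (simp add: vec_eq_iff)
qed

lemma vecm_smat: "vecm (smat c A) = c *s vecm A"
  by (simp add: vecm_def smat_def vec_eq_iff)
lemma vecm_diff: "vecm (A - B) = vecm A - vecm B"
  by (simp add: vecm_def vec_eq_iff)
lemma vecm_mat: "vecm (mat c :: complex^'n::finite^'n) = c *s vecm (mat 1)"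
  by (simp add: vecm_def mat_def vec_eq_iff)
lemma cadj_smat: "cadj (smat c A) = smat (cnj c) (cadj A)"
  by (simp add: cadj_def smat_def vec_eq_iff)

lemma cconj_cadj: "cconj (cadj A) = cadj (cconj A)"
  by (simp add: cconj_def cadj_def vec_eq_iff)

lemma cadj_kron: "cadj (kron A (cconj A)) = kron (cadj A) (cconj (cadj A))"
  by (simp add: kron_def cconj_def cadj_def vec_eq_iff)

lemma cadj_liouville: "cadj (liouville K) = liouville (\<lambda>k. cadj (K k))"
  unfolding liouville_def by (simp add: cadj_sum cadj_kron)

lemma kraus_cadj: "kraus_apply K (cadj X) = cadj (kraus_apply K X)"
  unfolding kraus_apply_def by (simp add: cadj_sum cadj_mult matrix_mul_assoc)

lemma kraus_mat1: "unital_channel K \<Longrightarrow> kraus_apply K (mat 1) = mat 1"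
  unfolding unital_channel_def kraus_apply_def by (simp add: matrix_mul_rid)




definition qf :: "complex^'n^'n \<Rightarrow> complex^'n::finite \<Rightarrow> complex" where
  "qf A x = (\<Sum>i\<in>UNIV. cnj (x $ i) * (A *v x) $ i)"

definition pd :: "complex^'n^'n \<Rightarrow> bool" where
  "pd A \<longleftrightarrow> (\<forall>x::complex^'n::finite. x \<noteq> 0 \<longrightarrow> 0 < Re (qf A x))"

definition col :: "complex^'n^'n \<Rightarrow> 'n \<Rightarrow> complex^'n::finite" where
  "col X j = (\<chi> i. X $ i $ j)"

lemma qf_zero[simp]: "qf A 0 = 0"
  by (simp add: qf_def)

lemma pd_nonneg: "pd A \<Longrightarrow> 0 \<le> Re (qf A x)"
  unfolding pd_def by (cases "x = 0") (auto intro: less_imp_le)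

lemma pd_psd: "hermitian A \<Longrightarrow> pd A \<Longrightarrow> psd A"
  unfolding psd_def qf_def[symmetric] using pd_nonneg by blast

lemma trace_col: "ctrace (cadj X ** \<rho> ** (X::complex^'n::finite^'n)) = (\<Sum>j\<in>UNIV. qf \<rho> (col X j))"
  unfolding ctrace_def qf_def col_def cadj_def matrix_matrix_mult_def matrix_vector_mult_def
  apply (simp add: sum_distrib_left sum_distrib_right mult_ac)
  apply (rule sum.cong[OF refl], subst sum.swap, simp add: mult_ac)
  done

lemma psd_trace: "psd \<rho> \<Longrightarrow> 0 \<le> Re (ctrace (cadj X ** \<rho> ** (X::complex^'n::finite^'n)))"
  unfolding trace_col Re_sum psd_def qf_def[symmetric]
  by (auto intro: sum_nonneg)

lemma pd_trace_zero:
  assumes "pd \<rho>" "Re (ctrace (cadj X ** \<rho> ** (X::complex^'n::finite^'n))) = 0"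
  shows "X = 0"
proof -
  have nn: "\<forall>j\<in>UNIV. 0 \<le> Re (qf \<rho> (col X j))"
    using assms(1) pd_nonneg by blast
  have "(\<Sum>j\<in>UNIV. Re (qf \<rho> (col X j))) = 0" using assms(2) unfolding trace_col Re_sum .
  then have "\<forall>j\<in>UNIV. Re (qf \<rho> (col X j)) = 0"
    using nn by (subst (asm) sum_nonneg_eq_0_iff) auto
  then have "\<forall>j. col X j = 0" using assms(1) unfolding pd_def by (metis UNIV_I less_irrefl)
  then show "X = 0" by (simp add: vec_eq_iff col_def)
qed

definition Tl :: "complex^'n^'n \<Rightarrow> complex^'n^'n \<Rightarrow> complex^'n::finite^'n" where
  "Tl \<rho> L = \<rho> ** L + L ** \<rho>"

lemma Tl_diff: "Tl \<rho> (A - B) = Tl \<rho> A - Tl \<rho> B"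
  by (simp add: Tl_def vec_eq_iff matrix_matrix_mult_def sum_subtractf algebra_simps)

lemma Tl_linear: "linear (Tl \<rho>)"
  by (rule linearI) (simp_all add: Tl_def vec_eq_iff matrix_matrix_mult_def sum.distrib
      algebra_simps scaleR_sum_right)

lemma Tl_inj:
  assumes h: "hermitian \<rho>" and p: "pd \<rho>"
  shows "inj (Tl \<rho>)"
proof -
  have z: "L = 0" if "Tl \<rho> L = 0" for L
  proof -
    have "ctrace (cadj L ** (\<rho> ** L + L ** \<rho>)) = 0"
      using that by (simp add: Tl_def ctrace_def)
    then have "ctrace (cadj L ** \<rho> ** L) + ctrace (cadj (cadj L) ** \<rho> ** cadj L) = 0"
    proof -
      have "ctrace (cadj L ** (L ** \<rho>)) = ctrace (L ** \<rho> ** cadj L)"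
        by (rule ctrace_comm)
      then show ?thesis using \<open>ctrace (cadj L ** (\<rho> ** L + L ** \<rho>)) = 0\<close>
        by (simp add: matrix_add_ldistrib ctrace_add matrix_mul_assoc)
    qed
    then have e: "Re (ctrace (cadj L ** \<rho> ** L)) + Re (ctrace (cadj (cadj L) ** \<rho> ** cadj L)) = 0"
      by (metis plus_complex.sel(1) zero_complex.sel(1))
    have ps: "psd \<rho>" using h p by (rule pd_psd)
    have "0 \<le> Re (ctrace (cadj L ** \<rho> ** L))" "0 \<le> Re (ctrace (cadj (cadj L) ** \<rho> ** cadj L))"
      using psd_trace[OF ps, of L] psd_trace[OF ps, of "cadj L"] by auto
    then have "Re (ctrace (cadj L ** \<rho> ** L)) = 0" using e by linarith
    then show "L = 0" using pd_trace_zero[OF p] by blast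
  qed
  show ?thesis
  proof (rule injI)
    fix x y assume "Tl \<rho> x = Tl \<rho> y"
    then have "Tl \<rho> (x - y) = 0" by (simp add: Tl_diff)
    then show "x = y" using z by fastforce
  qed
qed


lemma sld_exists:
  assumes h: "hermitian \<rho>" and p: "pd \<rho>" and hd: "hermitian d\<rho>"
  shows "\<exists>L. hermitian L \<and> d\<rho> + d\<rho> = \<rho> ** L + L ** \<rho>"
proof -
  have "surj (Tl \<rho>)"
    using linear_injective_imp_surjective[OF Tl_linear Tl_inj[OF h p]] by simp
  then obtain L where L: "Tl \<rho> L = d\<rho> + d\<rho>" by (metis surjD)
  have "Tl \<rho> (cadj L) = cadj (Tl \<rho> L)"
    using h by (simp add: Tl_def cadj_add cadj_mult hermitian_def add.commute)
  also have "\<dots> = d\<rho> + d\<rho>"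
  proof -
    have hd': "cadj d\<rho> = d\<rho>" using hd by (simp add: hermitian_def)
    show ?thesis by (simp only: L cadj_add hd')
  qed
  finally have "cadj L = L" using L Tl_inj[OF h p] by (metis injD)
  then show ?thesis using L by (auto simp: hermitian_def Tl_def)
qed

lemma disc:
  fixes a b c :: real
  assumes "\<forall>t. 0 \<le> a + 2*t*b + t^2*c" "0 \<le> c"
  shows "b^2 \<le> a*c"
proof (cases "c = 0")
  case True
  have "b = 0"
  proof (rule ccontr)
    assume "b \<noteq> 0"
    then have "0 \<le> a + 2*(-(a+1)/(2*b))*b" using assms(1) True by (metis mult_zero_right add_0_right power2_eq_square)
    then show False using \<open>b \<noteq> 0\<close> by (simp add: field_simps)
  qed
  then show ?thesis using True by simp
next
  case False
  then have c: "c > 0" using assms(2) by simp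
  have "0 \<le> a + 2*(-b/c)*b + (-b/c)^2*c" using assms(1) by blast
  then have "0 \<le> a - b^2/c" using c by (simp add: field_simps power2_eq_square)
  then show ?thesis using c by (simp add: field_simps)
qed

lemma mm_add_rdistrib: "(A + B) ** C = A ** C + B ** (C::complex^'n::finite^'m)"
  by (simp add: vec_eq_iff matrix_matrix_mult_def sum.distrib distrib_right)

lemma mm_scaleR_left: "(t *\<^sub>R A) ** B = t *\<^sub>R (A ** (B::complex^'n::finite^'m))"
  by (simp add: vec_eq_iff matrix_matrix_mult_def scaleR_sum_right)
lemma mm_scaleR_right: "A ** (t *\<^sub>R B) = t *\<^sub>R (A ** (B::complex^'n::finite^'m))"
  by (simp add: vec_eq_iff matrix_matrix_mult_def scaleR_sum_right)
lemma ctrace_scaleR: "ctrace (t *\<^sub>R A) = t *\<^sub>R ctrace A"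
  by (simp add: ctrace_def scaleR_sum_right)

lemma qfi_bound:
  fixes \<rho> :: "complex^'n::finite^'n"
  assumes h: "hermitian \<rho>" and ps: "psd \<rho>" and hL: "hermitian L"
    and sl: "d\<rho> + d\<rho> = \<rho> ** L + L ** \<rho>" and hO: "hermitian Q"
  shows "(Re (ctrace (Q ** d\<rho>)))^2 \<le> Re (ctrace (Q ** \<rho> ** Q)) * Re (ctrace (\<rho> ** L ** L))"
proof -
  define b where "b (X::complex^'n^'n) (Y::complex^'n^'n) = Re (ctrace (X ** \<rho> ** Y))" for X Y
  have sym: "b L Q = b Q L"
  proof -
    have "cadj (Q ** \<rho> ** L) = L ** \<rho> ** Q"
      using h hL hO by (simp add: cadj_mult hermitian_def matrix_mul_assoc)
    then have "ctrace (L ** \<rho> ** Q) = cnj (ctrace (Q ** \<rho> ** L))" by (metis ctrace_cadj)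
    then show ?thesis by (simp add: b_def)
  qed
  have d: "Re (ctrace (Q ** d\<rho>)) = b Q L"
  proof -
    have "ctrace (Q ** (d\<rho> + d\<rho>)) = ctrace (Q ** \<rho> ** L) + ctrace (Q ** (L ** \<rho>))"
      by (simp add: sl matrix_add_ldistrib ctrace_add matrix_mul_assoc)
    also have "ctrace (Q ** (L ** \<rho>)) = ctrace (L ** \<rho> ** Q)" by (rule ctrace_comm)
    moreover have "ctrace (Q ** (d\<rho> + d\<rho>)) = 2 * ctrace (Q ** d\<rho>)"
      by (simp only: matrix_add_ldistrib ctrace_add) simp
    ultimately have "2 * ctrace (Q ** d\<rho>) = ctrace (Q ** \<rho> ** L) + ctrace (L ** \<rho> ** Q)"
      by simp
    then have "Re (2 * ctrace (Q ** d\<rho>)) = b Q L + b L Q"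
      by (simp only: b_def plus_complex.sel)
    then have "2 * Re (ctrace (Q ** d\<rho>)) = b Q L + b L Q"
      by simp
    then show ?thesis using sym by simp
  qed
  have LL: "Re (ctrace (\<rho> ** L ** L)) = b L L"
  proof -
    have "ctrace (L ** (\<rho> ** L)) = ctrace (\<rho> ** L ** L)" by (rule ctrace_comm)
    then show ?thesis by (simp add: b_def matrix_mul_assoc)
  qed
  have q: "0 \<le> b Q Q + 2*t*b Q L + t^2 * b L L" for t
  proof -
    have "0 \<le> Re (ctrace (cadj (Q + t *\<^sub>R L) ** \<rho> ** (Q + t *\<^sub>R L)))" by (rule psd_trace[OF ps])
    also have "cadj (Q + t *\<^sub>R L) = Q + t *\<^sub>R L"
      using hO hL by (simp add: cadj_add cadj_scaleR hermitian_def)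
    also have "Re (ctrace ((Q + t *\<^sub>R L) ** \<rho> ** (Q + t *\<^sub>R L))) = b Q Q + t * b Q L + t * b L Q + t^2 * b L L"
      by (simp add: b_def matrix_add_ldistrib mm_add_rdistrib mm_scaleR_left mm_scaleR_right
          ctrace_add ctrace_scaleR power2_eq_square algebra_simps)
    finally show ?thesis using sym by simp
  qed
  have c0: "0 \<le> b L L"
    using psd_trace[OF ps, of L] hL by (simp add: b_def hermitian_def)
  have "(b Q L)^2 \<le> b Q Q * b L L" by (rule disc) (use q c0 in auto)
  then show ?thesis using d LL by (simp add: b_def)
qed




lemma qfi_sld_bound:
  fixes \<rho> :: "complex^'n::finite^'n"
  assumes h: "hermitian \<rho>" and p: "pd \<rho>" and hd: "hermitian d\<rho>" and hQ: "hermitian Q"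
  shows "(Re (ctrace (Q ** d\<rho>)))^2 \<le> Re (ctrace (Q ** \<rho> ** Q)) * qfi_sld \<rho> d\<rho>"
proof -
  define L where "L = (SOME L. hermitian L \<and> d\<rho> + d\<rho> = \<rho> ** L + L ** \<rho>)"
  have L: "hermitian L \<and> d\<rho> + d\<rho> = \<rho> ** L + L ** \<rho>"
    unfolding L_def by (rule someI_ex) (rule sld_exists[OF h p hd])
  have "qfi_sld \<rho> d\<rho> = Re (ctrace (\<rho> ** L ** L))"
    by (simp add: qfi_sld_def L_def Let_def)
  then show ?thesis using qfi_bound[OF h pd_psd[OF h p] _ _ hQ] L by simp
qed

lemma qf_add: "qf (A + B) x = qf A x + qf B x"
  by (simp add: qf_def matrix_vector_mult_add_rdistrib sum.distrib distrib_left)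

lemma qf_smat: "qf (smat c A) x = c * qf A x"
  by (simp add: qf_def smat_def matrix_vector_mult_def sum_distrib_left mult_ac)

lemma mat_mv: "mat c *v x = c *s (x::complex^'n::finite)"
  by (simp add: vec_eq_iff matrix_vector_mult_def mat_def if_distrib if_distribR cong: if_cong)

lemma qf_mat: "qf (mat c) x = c * of_real (\<Sum>i\<in>UNIV. (cmod (x$i))^2)"
proof -
  have "qf (mat c) x = (\<Sum>i\<in>UNIV. c * (cnj (x$i) * x$i))"
    by (simp add: qf_def mat_mv mult_ac)
  also have "\<dots> = c * of_real (\<Sum>i\<in>UNIV. (cmod (x$i))^2)"
    unfolding sum_distrib_left[symmetric] of_real_sum
    by (rule arg_cong[where f="\<lambda>z. c * z"], rule sum.cong)
      (simp_all add: complex_norm_square mult.commute del: of_real_power)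
  finally show ?thesis .
qed

lemma qf_bound:
  "cmod (qf A x) \<le> (\<Sum>i\<in>UNIV. \<Sum>j\<in>UNIV. cmod (A$i$j)) * (\<Sum>i\<in>UNIV. (cmod (x$i))^2)"
proof -
  define S where "S = (\<Sum>i\<in>UNIV. (cmod (x$i))^2)"
  have xk: "(cmod (x$k))^2 \<le> S" for k
    unfolding S_def by (rule member_le_sum) auto
  have xx: "cmod (x$i) * cmod (x$j) \<le> S" for i j
  proof -
    have "2 * (cmod (x$i) * cmod (x$j)) \<le> (cmod (x$i))^2 + (cmod (x$j))^2"
      using sum_squares_bound[of "cmod (x$i)" "cmod (x$j)"] by (simp add: mult.assoc)
    moreover have "(cmod (x$i))^2 \<le> S" "(cmod (x$j))^2 \<le> S" using xk by auto
    ultimately show ?thesis by linarith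
  qed
  have "qf A x = (\<Sum>i\<in>UNIV. \<Sum>j\<in>UNIV. cnj (x$i) * A$i$j * x$j)"
    by (simp add: qf_def matrix_vector_mult_def sum_distrib_left mult_ac)
  then have "cmod (qf A x) \<le> (\<Sum>i\<in>UNIV. cmod (\<Sum>j\<in>UNIV. cnj (x$i) * A$i$j * x$j))"
    by (simp add: norm_sum)
  also have "\<dots> \<le> (\<Sum>i\<in>UNIV. \<Sum>j\<in>UNIV. cmod (cnj (x$i) * A$i$j * x$j))"
    by (intro sum_mono norm_sum)
  also have "\<dots> \<le> (\<Sum>i\<in>UNIV. \<Sum>j\<in>UNIV. cmod (A$i$j) * S)"
  proof (intro sum_mono)
    fix i j
    have "cmod (cnj (x$i) * A$i$j * x$j) = cmod (A$i$j) * (cmod (x$i) * cmod (x$j))"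
      by (simp add: norm_mult)
    also have "\<dots> \<le> cmod (A$i$j) * S" using xx by (simp add: mult_left_mono)
    finally show "cmod (cnj (x$i) * A$i$j * x$j) \<le> cmod (A$i$j) * S" .
  qed
  finally show ?thesis by (simp add: S_def sum_distrib_right)
qed


lemma lin3: "- B \<le> (C::real) \<Longrightarrow> X = A + C \<Longrightarrow> B < A \<Longrightarrow> 0 < X"
  by linarith

lemma rho0_pd:
  fixes H :: "complex^'n::finite^'n" and \<epsilon> :: real
  assumes e: "0 < \<epsilon>" and eb: "\<epsilon> * (\<Sum>i\<in>UNIV. \<Sum>j\<in>UNIV. cmod (H$i$j)) \<le> 1 / (2 * real CARD('n))"
  shows "pd (mat (of_real (1 / real CARD('n))) + smat (of_real \<epsilon>) H)"
  unfolding pd_def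
proof (intro allI impI)
  fix x :: "complex^'n" assume "x \<noteq> 0"
  define S where "S = (\<Sum>i\<in>UNIV. (cmod (x$i))^2)"
  define a where "a = (\<Sum>i\<in>UNIV. \<Sum>j\<in>UNIV. cmod (H$i$j))"
  define n where "n = real CARD('n)"
  have n: "n > 0" by (simp add: n_def)
  obtain k where "x$k \<noteq> 0" using \<open>x \<noteq> 0\<close> by (auto simp: vec_eq_iff)
  then have "0 < (cmod (x$k))^2" by simp
  also have "\<dots> \<le> S" unfolding S_def by (rule member_le_sum) auto
  finally have S: "0 < S" .
  have "Re (qf H x) \<ge> - (a * S)"
    using qf_bound[of H x] abs_Re_le_cmod[of "qf H x"] unfolding a_def S_def by linarith
  then have "\<epsilon> * Re (qf H x) \<ge> - (\<epsilon> * a * S)" using e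
    by (metis minus_mult_right mult.assoc mult_le_cancel_left_pos)
  moreover have "\<epsilon> * a * S \<le> S / (2 * n)"
  proof -
    have "\<epsilon> * a \<le> 1 / (2 * n)" using eb unfolding a_def n_def .
    then have "\<epsilon> * a * S \<le> 1 / (2 * n) * S" using S by (intro mult_right_mono) auto
    then show ?thesis by simp
  qed
  ultimately have "\<epsilon> * Re (qf H x) \<ge> - (S / (2 * n))" by linarith
  moreover have "Re (qf (mat (of_real (1 / real CARD('n))) + smat (of_real \<epsilon>) H) x) = S / n + \<epsilon> * Re (qf H x)"
    by (simp add: qf_add qf_mat qf_smat S_def n_def)
  moreover have "S / (2 * n) < S / n"
  proof -
    have "0 < S / n" using S n by simp
    moreover have "S / (2 * n) = (S / n) / 2" by simp
    ultimately show ?thesis by linarith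
  qed
  ultimately show "0 < Re (qf (mat (of_real (1 / real CARD('n))) + smat (of_real \<epsilon>) H) x)"
    by (rule lin3)
qed




locale setting =
  fixes K :: "real \<Rightarrow> 'k::finite \<Rightarrow> complex ^'n::finite ^'n"
    and \<theta>0 :: real
    and P :: "complex ^('n \<times> 'n) ^('n \<times> 'n)"
    and Uc R0 :: "complex ^'n ^'n"
    and \<mu> :: complex
  assumes chan: "\<forall>\<theta>. unital_channel (K \<theta>)"
    and diff: "\<forall>\<theta>. (\<lambda>t. liouville (K t)) differentiable (at \<theta>)"
    and P_proj: "P ** P = P" "cadj P = P"
    and P_range: "\<forall>v. P *v v = v \<longleftrightarrow>
        (cadj (liouville (K \<theta>0)) ** liouville (K \<theta>0)) *v v = v"
    and Uc: "unitary Uc"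
    and eigvec: "vecm R0 \<noteq> 0" "\<mu> \<noteq> 0"
      "(P ** cadj (liouville (K \<theta>0)) ** vector_derivative (\<lambda>t. liouville (K t)) (at \<theta>0) ** P) *v vecm R0
         = \<mu> *s vecm R0"
    and ctrl: "cadj Uc ** R0 ** Uc = kraus_apply (K \<theta>0) R0"
begin

definition "L0 = liouville (K \<theta>0)"
definition "D = vector_derivative (\<lambda>t. liouville (K t)) (at \<theta>0)"
definition "V = kron Uc (cconj Uc)"
definition "S = V ** L0"
definition "G = P ** cadj L0 ** D ** P"
definition "Phi t X = Uc ** kraus_apply (K t) X ** cadj Uc"
definition "Good X \<longleftrightarrow> S *v vecm X = vecm X \<and> P *v vecm X = vecm X"

lemma hasD: "((\<lambda>t. liouville (K t)) has_vector_derivative D) (at \<theta>0)"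
  unfolding D_def using diff vector_derivative_works by blast

lemma U1: "cadj Uc ** Uc = mat 1" and U2: "Uc ** cadj Uc = mat 1"
  using Uc by (auto simp: unitary_def)

lemma V_act: "V *v vecm X = vecm (Uc ** X ** cadj Uc)"
  by (simp add: V_def kron_vecm)

lemma Vadj_act: "cadj V *v vecm X = vecm (cadj Uc ** X ** Uc)"
  using kron_vecm[of "cadj Uc" X] by (simp add: V_def cadj_kron)

lemma Vadj_V: "cadj V *v (V *v v) = v"
proof -
  have "cadj Uc ** (Uc ** X ** cadj Uc) ** Uc = (cadj Uc ** Uc) ** X ** (cadj Uc ** Uc)" for X
    by (simp add: matrix_mul_assoc)
  then have "cadj V *v (V *v vecm X) = vecm X" for X
    by (simp add: V_act Vadj_act U1)
  from this[of "unvec v"] show ?thesis by simp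
qed

lemma S_act: "S *v vecm X = vecm (Phi \<theta>0 X)"
  by (simp add: S_def Phi_def L0_def matrix_vector_mul_assoc[symmetric] liouville_vecm V_act)

lemma L0adj_act: "cadj L0 *v vecm X = vecm (kraus_apply (\<lambda>k. cadj (K \<theta>0 k)) X)"
  by (simp add: L0_def cadj_liouville liouville_vecm)

lemma Phi_cadj: "Phi t (cadj X) = cadj (Phi t X)"
  by (simp add: Phi_def kraus_cadj cadj_mult matrix_mul_assoc)

lemma Phi_herm: "hermitian X \<Longrightarrow> hermitian (Phi t X)"
  by (metis Phi_cadj hermitian_def)

lemma Phi_I: "Phi t (mat 1) = mat 1"
  using chan by (simp add: Phi_def kraus_mat1 U2)

lemma PG: "P ** G = G"
  by (simp add: G_def matrix_mul_assoc P_proj)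

lemma PR: "P *v vecm R0 = vecm R0"
proof -
  have "P *v (G *v vecm R0) = G *v vecm R0"
    by (simp add: matrix_vector_mul_assoc PG)
  then have "\<mu> *s (P *v vecm R0) = \<mu> *s vecm R0"
    using eigvec(3) by (simp add: G_def L0_def D_def mv_smult)
  then show ?thesis using eigvec(2) by (simp add: vec_eq_iff)
qed

lemma PRadj: "P *v vecm (cadj R0) = vecm (cadj R0)"
proof -
  let ?Kd = "\<lambda>k. cadj (K \<theta>0 k)"
  have "(cadj L0 ** L0) *v vecm R0 = vecm R0" using P_range PR by (simp add: L0_def)
  then have "vecm (kraus_apply ?Kd (kraus_apply (K \<theta>0) R0)) = vecm R0"
    by (simp add: matrix_vector_mul_assoc[symmetric] L0adj_act[unfolded L0_def] L0_def liouville_vecm)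
  then have e: "kraus_apply ?Kd (kraus_apply (K \<theta>0) R0) = R0" by (rule vecm_inj)
  have "(cadj L0 ** L0) *v vecm (cadj R0) = vecm (kraus_apply ?Kd (kraus_apply (K \<theta>0) (cadj R0)))"
    by (simp add: matrix_vector_mul_assoc[symmetric] L0adj_act[unfolded L0_def] L0_def liouville_vecm)
  also have "\<dots> = vecm (cadj R0)" using e by (simp add: kraus_cadj)
  finally show ?thesis using P_range by (simp add: L0_def)
qed

lemma PhiR: "Phi \<theta>0 R0 = R0"
proof -
  have "Phi \<theta>0 R0 = Uc ** (cadj Uc ** R0 ** Uc) ** cadj Uc" by (simp add: Phi_def ctrl)
  also have "\<dots> = (Uc ** cadj Uc) ** R0 ** (Uc ** cadj Uc)" by (simp add: matrix_mul_assoc)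
  finally show ?thesis by (simp add: U2)
qed

lemma Good_R: "Good R0" and Good_Radj: "Good (cadj R0)"
  using PR PRadj PhiR Phi_cadj[of \<theta>0 R0] by (auto simp: Good_def S_act)

lemma Good_add: "Good X \<Longrightarrow> Good Y \<Longrightarrow> Good (X + Y)"
  by (simp add: Good_def vecm_add mv_add)
lemma Good_diff: "Good X \<Longrightarrow> Good Y \<Longrightarrow> Good (X - Y)"
  by (simp add: Good_def vecm_diff mv_diff)
lemma Good_smat: "Good X \<Longrightarrow> Good (smat c X)"
  by (simp add: Good_def vecm_smat mv_smult)

lemma Good_L0: "Good X \<Longrightarrow> L0 *v vecm X = cadj V *v vecm X"
  unfolding Good_def S_def by (metis Vadj_V matrix_vector_mul_assoc)

lemma Good_adj: "Good X \<Longrightarrow> cadj S *v vecm X = vecm X"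
proof -
  assume g: "Good X"
  have "cadj S *v vecm X = cadj L0 *v (cadj V *v vecm X)"
    by (simp add: S_def cadj_mult matrix_vector_mul_assoc)
  also have "\<dots> = cadj L0 *v (L0 *v vecm X)" using Good_L0[OF g] by simp
  also have "\<dots> = (cadj L0 ** L0) *v vecm X" by (simp only: matrix_vector_mul_assoc)
  also have "\<dots> = vecm X" using g P_range by (simp add: Good_def L0_def)
  finally show ?thesis .
qed

lemma Good_ipS: "Good X \<Longrightarrow> ip (vecm X) (S *v g) = ip (vecm X) g"
  by (simp add: ip_adj Good_adj)

lemma ip_adj2: "ip (M *v u) v = ip u (cadj M *v v)"
  using ip_adj[of u "cadj M" v] by simp

lemma Good_key: "Good X \<Longrightarrow> Good H \<Longrightarrow> ip (vecm X) (V *v (D *v vecm H)) = ip (vecm X) (G *v vecm H)"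
proof -
  assume gx: "Good X" and gh: "Good H"
  have "ip (vecm X) (V *v (D *v vecm H)) = ip (cadj V *v vecm X) (D *v vecm H)" by (rule ip_adj)
  also have "\<dots> = ip (L0 *v vecm X) (D *v (P *v vecm H))" using Good_L0[OF gx] gh by (simp add: Good_def)
  also have "\<dots> = ip (P *v vecm X) (cadj L0 *v (D *v (P *v vecm H)))" using gx by (simp add: ip_adj2 Good_def)
  also have "\<dots> = ip (vecm X) (G *v vecm H)"
    by (simp add: ip_adj2 P_proj G_def matrix_vector_mul_assoc matrix_mul_assoc)
  finally show ?thesis .
qed

end



lemma mv_scaleR_left: "(r *\<^sub>R A) *v x = r *\<^sub>R (A *v (x::complex^'n::finite))"
  by (simp add: vec_eq_iff matrix_vector_mult_def scaleR_sum_right)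
lemma mv_scaleR_right: "A *v (r *\<^sub>R x) = r *\<^sub>R (A *v (x::complex^'n::finite))"
  by (simp add: vec_eq_iff matrix_vector_mult_def scaleR_sum_right)

lemma bl_mv_left: "bounded_linear (\<lambda>A::complex^'n::finite^'m::finite. A *v e)"
  unfolding linear_conv_bounded_linear[symmetric]
  by (rule linearI) (simp_all add: matrix_vector_mult_add_rdistrib mv_scaleR_left)

lemma bil_mv: "bounded_bilinear (\<lambda>(A::complex^'n::finite^'m::finite) x. A *v x)"
  unfolding bilinear_conv_bounded_bilinear[symmetric] bilinear_def
  by (auto intro!: linearI simp: matrix_vector_mult_add_rdistrib mv_scaleR_left mv_add mv_scaleR_right)

lemma bl_unvec: "bounded_linear (unvec :: complex^('n::finite\<times>'n) \<Rightarrow> complex^'n^'n)"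
  unfolding linear_conv_bounded_linear[symmetric]
  by (rule linearI) (simp_all add: unvec_def vec_eq_iff)

lemma bl_cadj: "bounded_linear (cadj :: complex^'n::finite^'n \<Rightarrow> complex^'n^'n)"
  unfolding linear_conv_bounded_linear[symmetric]
  by (rule linearI) (simp_all add: cadj_add cadj_scaleR)

lemma herm_ctrace_real: "hermitian A \<Longrightarrow> hermitian B \<Longrightarrow> Im (ctrace (A ** B)) = 0"
proof -
  assume a: "hermitian A" and b: "hermitian B"
  have "cnj (ctrace (A ** B)) = ctrace (cadj (A ** B))" by (simp add: ctrace_cadj)
  also have "\<dots> = ctrace (B ** A)" using a b by (simp add: cadj_mult hermitian_def)
  also have "\<dots> = ctrace (A ** B)" by (rule ctrace_comm)
  finally have "cnj (ctrace (A ** B)) = ctrace (A ** B)" .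
  from arg_cong[OF this, of Im] show ?thesis by simp
qed

lemma ctrace_unvec: "hermitian Q \<Longrightarrow> ctrace (Q ** unvec g) = ip (vecm Q) g"
  unfolding hermitian_def
proof -
  assume h: "cadj Q = Q"
  have q: "cnj (Q$i$j) = Q$j$i" for i j using arg_cong[OF h, of "\<lambda>M. M$j$i"] by (simp add: cadj_def)
  have "ip (vecm Q) g = (\<Sum>i\<in>UNIV. \<Sum>j\<in>UNIV. Q$j$i * g$(i,j))"
    by (simp add: ip_def vecm_def sum_UNIV_pair q)
  also have "\<dots> = ctrace (Q ** unvec g)"
    by (simp add: ctrace_def matrix_matrix_mult_def unvec_def, subst sum.swap, simp)
  finally show ?thesis by simp
qed

context setting begin

lemma exists_pair:
  "\<exists>Q H. Good Q \<and> Good H \<and> hermitian Q \<and> hermitian H \<and> ip (vecm Q) (G *v vecm H) \<noteq> 0"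
proof (rule ccontr)
  assume na: "\<not> ?thesis"
  define O1 where "O1 = R0 + cadj R0"
  define O2 where "O2 = smat \<i> (R0 - cadj R0)"
  have g1: "Good O1" unfolding O1_def by (intro Good_add Good_R Good_Radj)
  have g2: "Good O2" unfolding O2_def by (intro Good_smat Good_diff Good_R Good_Radj)
  have h1: "hermitian O1" by (simp add: O1_def hermitian_def cadj_add add.commute)
  have h2: "hermitian O2"
  proof -
    have "cadj O2 = smat (cnj \<i>) (cadj R0 - R0)" by (simp add: O2_def cadj_smat cadj_diff)
    also have "\<dots> = O2" by (simp add: O2_def smat_def vec_eq_iff algebra_simps)
    finally show ?thesis by (simp add: hermitian_def)
  qed
  define R where "R = vecm R0"
  define R' where "R' = vecm (cadj R0)"
  have w1: "vecm O1 = R + R'" by (simp add: O1_def R_def R'_def vecm_add)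
  have w2: "vecm O2 = \<i> *s (R - R')" by (simp add: O2_def R_def R'_def vecm_smat vecm_diff)
  define a where "a = ip R (G *v R)"
  define b where "b = ip R (G *v R')"
  define c where "c = ip R' (G *v R)"
  define d where "d = ip R' (G *v R')"
  have z: "ip (vecm X) (G *v vecm Y) = 0" if "X \<in> {O1, O2}" "Y \<in> {O1, O2}" for X Y
  proof -
    have "Good X" "Good Y" "hermitian X" "hermitian Y" using that g1 g2 h1 h2 by auto
    then show ?thesis using na by blast
  qed
  have e1: "a + b + c + d = 0" using z[of O1 O1]
    by (simp add: w1 mv_add ip_add_left ip_add_right a_def b_def c_def d_def algebra_simps)
  have e2: "\<i> * (a - b + c - d) = 0" using z[of O1 O2]
    by (simp add: w1 w2 mv_add mv_diff mv_smult ip_add_left ip_add_right ip_diff_right ip_smult_right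
        a_def b_def c_def d_def algebra_simps)
  have e3: "- \<i> * (a + b - c - d) = 0" using z[of O2 O1]
    by (simp add: w1 w2 mv_add mv_diff mv_smult ip_add_right ip_diff_left ip_smult_left ip_add_left
        a_def b_def c_def d_def algebra_simps)
  have e4: "a - b - c + d = 0" using z[of O2 O2]
    by (simp add: w2 mv_diff mv_smult ip_diff_right ip_diff_left ip_smult_left ip_smult_right
        a_def b_def c_def d_def algebra_simps)
  have "a - b + c - d = 0" using e2 by simp
  moreover have "a + b - c - d = 0" using e3 by simp
  ultimately have "a = 0" using e1 e4 by algebra
  moreover have "a = \<mu> * ip R R"
    using eigvec(3) by (simp add: a_def R_def G_def L0_def D_def ip_smult_right)
  moreover have "ip R R \<noteq> 0" using eigvec(1) ip_self_zero R_def by blast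
  ultimately show False using eigvec(2) by simp
qed

end



lemma bl_mv_right: "bounded_linear (\<lambda>x. (A::complex^'n::finite^'m::finite) *v x)"
  using bounded_bilinear.bounded_linear_right[OF bil_mv, of A] by simp

lemma ctrace_mat: "ctrace (mat c :: complex^'n::finite^'n) = of_nat CARD('n) * c"
  by (simp add: ctrace_def mat_def)
lemma ctrace_smat: "ctrace (smat c A) = c * ctrace A"
  by (simp add: ctrace_def smat_def sum_distrib_left)
lemma ctrace_diff: "ctrace (A - B) = ctrace A - ctrace B"
  by (simp add: ctrace_def sum_subtractf)

lemma ip_zero_right: "ip u 0 = 0"
  by (simp add: ip_def)

context setting begin

definition "rho \<rho>0 N t = ((\<lambda>\<rho>. Uc ** kraus_apply (K t) \<rho> ** cadj Uc) ^^ N) \<rho>0"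

lemma rho_Suc: "rho \<rho>0 (Suc N) t = Phi t (rho \<rho>0 N t)"
  by (simp add: rho_def Phi_def)

lemma vec_rho_Suc: "vecm (rho \<rho>0 (Suc N) t) = V *v (liouville (K t) *v vecm (rho \<rho>0 N t))"
  by (simp add: rho_Suc Phi_def V_act liouville_vecm)

lemma rho_herm: "hermitian \<rho>0 \<Longrightarrow> hermitian (rho \<rho>0 N t)"
  by (induction N) (simp_all add: rho_def[symmetric] rho_Suc Phi_herm, simp add: rho_def)

lemma DI: "D *v vecm (mat 1) = 0"
proof -
  have "((\<lambda>t. liouville (K t) *v vecm (mat 1)) has_vector_derivative D *v vecm (mat 1)) (at \<theta>0)"
    using bounded_linear.has_vector_derivative[OF bl_mv_left hasD] by simp
  moreover have "(\<lambda>t. liouville (K t) *v vecm (mat 1)) = (\<lambda>t. vecm (mat 1))"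
    using chan by (simp add: liouville_vecm kraus_mat1)
  ultimately have "((\<lambda>t. vecm (mat 1)) has_vector_derivative D *v vecm (mat 1)) (at \<theta>0)" by simp
  then show ?thesis using vector_derivative_unique_at has_vector_derivative_const by blast
qed

lemma evolution:
  assumes fix0: "Phi \<theta>0 \<rho>0 = \<rho>0" and gQ: "Good Q"
  shows "\<exists>g. ((\<lambda>t. vecm (rho \<rho>0 N t)) has_vector_derivative g) (at \<theta>0) \<and>
             ip (vecm Q) g = of_nat N * ip (vecm Q) (V *v (D *v vecm \<rho>0)) \<and> rho \<rho>0 N \<theta>0 = \<rho>0"
proof (induction N)
  case 0
  have "(\<lambda>t. vecm (rho \<rho>0 0 t)) = (\<lambda>t. vecm \<rho>0)" by (simp add: rho_def)
  then have "((\<lambda>t. vecm (rho \<rho>0 0 t)) has_vector_derivative 0) (at \<theta>0)" by simp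
  then show ?case by (intro exI[of _ 0]) (simp add: ip_zero_right rho_def)
next
  case (Suc N)
  then obtain g where g: "((\<lambda>t. vecm (rho \<rho>0 N t)) has_vector_derivative g) (at \<theta>0)"
    and ig: "ip (vecm Q) g = of_nat N * ip (vecm Q) (V *v (D *v vecm \<rho>0))"
    and r0: "rho \<rho>0 N \<theta>0 = \<rho>0" by blast
  have d1: "((\<lambda>t. liouville (K t) *v vecm (rho \<rho>0 N t)) has_vector_derivative
      (liouville (K \<theta>0) *v g + D *v vecm \<rho>0)) (at \<theta>0)"
    using bounded_bilinear.has_vector_derivative[OF bil_mv hasD g] r0 by simp
  have d2: "((\<lambda>t. V *v (liouville (K t) *v vecm (rho \<rho>0 N t))) has_vector_derivative
      (V *v (liouville (K \<theta>0) *v g + D *v vecm \<rho>0))) (at \<theta>0)"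
    using bounded_linear.has_vector_derivative[OF bl_mv_right[of V] d1] by simp
  have "(\<lambda>t. vecm (rho \<rho>0 (Suc N) t)) = (\<lambda>t. V *v (liouville (K t) *v vecm (rho \<rho>0 N t)))"
    by (simp add: vec_rho_Suc)
  moreover have "ip (vecm Q) (V *v (liouville (K \<theta>0) *v g + D *v vecm \<rho>0))
      = of_nat (Suc N) * ip (vecm Q) (V *v (D *v vecm \<rho>0))"
  proof -
    have "ip (vecm Q) (V *v (liouville (K \<theta>0) *v g + D *v vecm \<rho>0))
        = ip (vecm Q) (S *v g) + ip (vecm Q) (V *v (D *v vecm \<rho>0))"
      by (simp add: mv_add ip_add_right S_def L0_def matrix_vector_mul_assoc)
    also have "\<dots> = ip (vecm Q) g + ip (vecm Q) (V *v (D *v vecm \<rho>0))"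
      using Good_ipS[OF gQ] by simp
    finally show ?thesis using ig by (simp add: algebra_simps)
  qed
  moreover have "rho \<rho>0 (Suc N) \<theta>0 = \<rho>0" using r0 fix0 by (simp add: rho_Suc)
  ultimately show ?case using d2 by auto
qed

end



context setting begin

lemma main:
  "\<exists>\<rho>0. density_matrix \<rho>0 \<and>
     liminf (\<lambda>N::nat. ereal (QFI (\<lambda>\<theta>. ((\<lambda>\<rho>. Uc ** kraus_apply (K \<theta>) \<rho> ** cadj Uc) ^^ N) \<rho>0) \<theta>0
                               / (real N)^2)) > 0"
proof -
  obtain Q H where gQ: "Good Q" and gH: "Good H" and hQ: "hermitian Q" and hH: "hermitian H"
    and nz: "ip (vecm Q) (G *v vecm H) \<noteq> 0"
    using exists_pair by blast
  define n where "n = real CARD('n)"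
  have n0: "n > 0" by (simp add: n_def)
  define tH where "tH = ctrace H"
  define H' where "H' = H - mat (tH / of_real n)"
  define a where "a = (\<Sum>i\<in>UNIV. \<Sum>j\<in>UNIV. cmod (H'$i$j))"
  have a0: "a \<ge> 0" unfolding a_def by (intro sum_nonneg) auto
  define \<epsilon> where "\<epsilon> = 1 / (2 * n * (a + 1))"
  have e0: "\<epsilon> > 0" using n0 a0 by (simp add: \<epsilon>_def)
  have ea: "\<epsilon> * a \<le> 1 / (2 * n)"
  proof -
    have "\<epsilon> * a = (1 / (2 * n)) * (a / (a + 1))" using n0 a0 by (simp add: \<epsilon>_def field_simps)
    also have "\<dots> \<le> (1 / (2 * n)) * 1" using n0 a0 by (intro mult_left_mono) auto
    finally show ?thesis by simp
  qed
  define \<rho>0 where "\<rho>0 = mat (of_real (1 / n)) + smat (of_real \<epsilon>) H'"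
  have tHr: "cnj tH = tH"
    using hH by (simp add: tH_def hermitian_def ctrace_cadj[symmetric])
  have hH': "hermitian H'"
    using hH tHr by (simp add: H'_def hermitian_def cadj_diff cadj_mat)
  have herm: "hermitian \<rho>0"
    using hH' by (simp add: \<rho>0_def hermitian_def cadj_add cadj_mat cadj_smat)
  have pd: "pd \<rho>0"
    unfolding \<rho>0_def n_def using rho0_pd[OF e0, of H'] ea by (simp add: a_def n_def)
  have tr: "ctrace \<rho>0 = 1"
  proof -
    have "ctrace H' = 0" using n0 by (simp add: H'_def ctrace_diff ctrace_mat tH_def n_def)
    then show ?thesis using n0 by (simp add: \<rho>0_def ctrace_add ctrace_smat ctrace_mat n_def)
  qed
  have dm: "density_matrix \<rho>0"
    using pd_psd[OF herm pd] tr by (simp add: density_matrix_def)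
  define vI where "vI = vecm (mat 1 :: complex^'n^'n)"
  have vr: "vecm \<rho>0 = of_real (1/n) *s vI + of_real \<epsilon> *s (vecm H - (tH / of_real n) *s vI)"
    by (simp add: \<rho>0_def H'_def vI_def vecm_def mat_def smat_def vec_eq_iff algebra_simps)
  have SI: "S *v vI = vI" by (simp add: vI_def S_act Phi_I)
  have SH: "S *v vecm H = vecm H" using gH by (simp add: Good_def)
  have "S *v vecm \<rho>0 = vecm \<rho>0"
    by (simp add: vr mv_add mv_smult mv_diff SI SH)
  then have fix0: "Phi \<theta>0 \<rho>0 = \<rho>0" using S_act vecm_inj by metis
  have Dr: "D *v vecm \<rho>0 = of_real \<epsilon> *s (D *v vecm H)"
    using DI by (simp add: vr mv_add mv_smult mv_diff vI_def mv_zero)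
  define c where "c = ip (vecm Q) (V *v (D *v vecm \<rho>0))"
  have c_eq: "c = of_real \<epsilon> * ip (vecm Q) (G *v vecm H)"
    by (simp add: c_def Dr mv_smult ip_smult_right Good_key[OF gQ gH])
  have cnz: "c \<noteq> 0" using c_eq e0 nz by simp
  define \<beta> where "\<beta> = Re (ctrace (Q ** \<rho>0 ** Q))"
  have \<beta>0: "\<beta> \<ge> 0"
    using psd_trace[OF pd_psd[OF herm pd], of Q] hQ by (simp add: \<beta>_def hermitian_def)
  define F where "F N = QFI (\<lambda>\<theta>. ((\<lambda>\<rho>. Uc ** kraus_apply (K \<theta>) \<rho> ** cadj Uc) ^^ N) \<rho>0) \<theta>0" for N
  have bound: "(real N * Re c)^2 \<le> \<beta> * F N \<and> (N = 1 \<longrightarrow> Im c = 0)" for N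
  proof -
    obtain g where g: "((\<lambda>t. vecm (rho \<rho>0 N t)) has_vector_derivative g) (at \<theta>0)"
      and ig: "ip (vecm Q) g = of_nat N * c" and r0: "rho \<rho>0 N \<theta>0 = \<rho>0"
      using evolution[OF fix0 gQ, of N] unfolding c_def by blast
    have dg: "(rho \<rho>0 N has_vector_derivative unvec g) (at \<theta>0)"
      using bounded_linear.has_vector_derivative[OF bl_unvec g] by simp
    have vd: "vector_derivative (rho \<rho>0 N) (at \<theta>0) = unvec g"
      by (rule vector_derivative_at[OF dg])
    have "((\<lambda>t. cadj (rho \<rho>0 N t)) has_vector_derivative cadj (unvec g)) (at \<theta>0)"
      using bounded_linear.has_vector_derivative[OF bl_cadj dg] by simp
    moreover have "(\<lambda>t. cadj (rho \<rho>0 N t)) = rho \<rho>0 N"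
      using rho_herm[OF herm] by (auto simp: hermitian_def)
    ultimately have "cadj (unvec g) = unvec g"
      using dg vector_derivative_unique_at by metis
    then have hg: "hermitian (unvec g)" by (simp add: hermitian_def)
    have tq: "ctrace (Q ** unvec g) = of_nat N * c" using ctrace_unvec[OF hQ] ig by simp
    have F: "F N = qfi_sld \<rho>0 (unvec g)"
      using vd r0 by (simp add: F_def QFI_def rho_def[symmetric])
    have "(Re (ctrace (Q ** unvec g)))^2 \<le> \<beta> * F N"
      using qfi_sld_bound[OF herm pd hg hQ] by (simp add: F \<beta>_def)
    moreover have "Re (ctrace (Q ** unvec g)) = real N * Re c" using tq by simp
    moreover have "N = 1 \<longrightarrow> Im c = 0" using herm_ctrace_real[OF hQ hg] tq by auto
    ultimately show ?thesis by simp
  qed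
  have Imc: "Im c = 0" using bound[of 1] by simp
  have Rec: "Re c \<noteq> 0" using Imc cnz complex_eq_iff by auto
  have "(Re c)^2 \<le> \<beta> * F 1" using bound[of 1] by simp
  moreover have "(Re c)^2 > 0" using Rec by simp
  ultimately have \<beta>p: "\<beta> > 0" using \<beta>0 by (metis less_le mult_zero_left not_le)
  define \<kappa> where "\<kappa> = (Re c)^2 / \<beta>"
  have \<kappa>0: "\<kappa> > 0" using \<beta>p Rec by (simp add: \<kappa>_def)
  have lb: "\<kappa> \<le> F N / (real N)^2" if "N \<ge> 1" for N
  proof -
    have Np: "(real N)^2 > 0" using that by simp
    have "(real N)^2 * (Re c)^2 \<le> \<beta> * F N" using bound[of N] by (simp add: power_mult_distrib)
    then show ?thesis using Np \<beta>p by (simp add: \<kappa>_def field_simps)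
  qed
  have "ereal \<kappa> \<le> liminf (\<lambda>N. ereal (F N / (real N)^2))"
    by (rule Liminf_bounded) (use lb in \<open>auto simp: eventually_sequentially\<close>)
  then have "0 < liminf (\<lambda>N. ereal (F N / (real N)^2))"
    using \<kappa>0 by (meson ereal_less(2) less_le_trans)
  then show ?thesis using dm unfolding F_def by blast
qed

end

theorem theorem2:
  fixes K :: "real \<Rightarrow> 'k::finite \<Rightarrow> complex ^'n::finite ^'n"
    and \<theta>0 :: real
    and P :: "complex ^('n \<times> 'n) ^('n \<times> 'n)"
    and Uc R0 :: "complex ^'n ^'n"
    and \<mu> :: complex
  assumes chan: "\<forall>\<theta>. unital_channel (K \<theta>)"
    and diff: "\<forall>\<theta>. (\<lambda>t. liouville (K t)) differentiable (at \<theta>)"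
    and P_proj: "P ** P = P" "cadj P = P"
    and P_range: "\<forall>v. P *v v = v \<longleftrightarrow>
        (cadj (liouville (K \<theta>0)) ** liouville (K \<theta>0)) *v v = v"
    and nz: "P ** cadj (liouville (K \<theta>0)) ** vector_derivative (\<lambda>t. liouville (K t)) (at \<theta>0) ** P \<noteq> 0"
    and normal: "normal_op (P ** cadj (liouville (K \<theta>0)) ** vector_derivative (\<lambda>t. liouville (K t)) (at \<theta>0) ** P)"
    and Uc: "unitary Uc"
    and eigvec: "vecm R0 \<noteq> 0" "\<mu> \<noteq> 0"
      "(P ** cadj (liouville (K \<theta>0)) ** vector_derivative (\<lambda>t. liouville (K t)) (at \<theta>0) ** P) *v vecm R0
         = \<mu> *s vecm R0"
    and ctrl: "cadj Uc ** R0 ** Uc = kraus_apply (K \<theta>0) R0"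
  shows "\<exists>\<rho>0. density_matrix \<rho>0 \<and>
     liminf (\<lambda>N::nat. ereal (QFI (\<lambda>\<theta>. ((\<lambda>\<rho>. Uc ** kraus_apply (K \<theta>) \<rho> ** cadj Uc) ^^ N) \<rho>0) \<theta>0
                               / (real N)^2)) > 0"
  proof -
  interpret s: setting K \<theta>0 P Uc R0 \<mu>
    using chan diff P_proj P_range Uc eigvec ctrl by (simp add: setting_def)
  show ?thesis by (rule s.main)
qed

end
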